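(* Let $f,g\in\mathcal{S}_d$ be such that $\hat{\mathbb{D}}_{\beta,d}(f,g)$ is finite for some $\beta>0$, and suppose that $S_f(x)\ll x^\alpha$. Then $S_g(x)\ll x^{\max(\alpha,\beta)}$.
   Context: $\mathcal{S}_d$ is the set of "degree $d$" multiplicative functions: those $f$ with $f=f_1*\cdots*f_d$, where each $f_i$ is a completely multiplicative function with $|f_i(n)|\le1$ for all $n$, and $(a*b)(n)=\sum_{dm=n}a(d)b(m)$. $S_f(x):=\sum_{n\le x}f(n)$. $\hat{\mathbb{D}}_{\beta,k}(f,g):=\sum_p\sum_{j=1}^k\frac{|f(p^j)-g(p^j)|}{p^{j\beta}}$ (sum over primes). *)

theory Defs
  imports "HOL-Analysis.Analysis" "HOL-Library.Landau_Symbols"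
begin

text \<open>Arithmetic functions are modelled as nat => complex; only arguments n >= 1 matter.\<close>

definition completely_multiplicative :: "(nat \<Rightarrow> complex) \<Rightarrow> bool" where
  "completely_multiplicative h \<longleftrightarrow>
     h 1 = 1 \<and> (\<forall>m n. m > 0 \<longrightarrow> n > 0 \<longrightarrow> h (m * n) = h m * h n)"

definition dirichlet_conv :: "(nat \<Rightarrow> complex) \<Rightarrow> (nat \<Rightarrow> complex) \<Rightarrow> nat \<Rightarrow> complex" where
  "dirichlet_conv a b n = (\<Sum>k | k dvd n. a k * b (n div k))"

definition dirichlet_unit :: "nat \<Rightarrow> complex" where
  "dirichlet_unit n = (if n = 1 then 1 else 0)"

definition conv_list :: "(nat \<Rightarrow> complex) list \<Rightarrow> nat \<Rightarrow> complex" where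
  "conv_list fs = foldr dirichlet_conv fs dirichlet_unit"

definition S_deg :: "nat \<Rightarrow> (nat \<Rightarrow> complex) set" where
  "S_deg d = {f. \<exists>fs. length fs = d \<and>
      (\<forall>h\<in>set fs. completely_multiplicative h \<and> (\<forall>n>0. cmod (h n) \<le> 1)) \<and>
      (\<forall>n>0. f n = conv_list fs n)}"

definition summatory :: "(nat \<Rightarrow> complex) \<Rightarrow> real \<Rightarrow> complex" where
  "summatory f x = (\<Sum>n\<in>{1..nat \<lfloor>x\<rfloor>}. f n)"

definition Dhat_term :: "real \<Rightarrow> nat \<Rightarrow> (nat \<Rightarrow> complex) \<Rightarrow> (nat \<Rightarrow> complex) \<Rightarrow> nat \<Rightarrow> real" where
  "Dhat_term \<beta> k f g p = (\<Sum>j=1..k. cmod (f (p ^ j) - g (p ^ j)) / real p powr (real j * \<beta>))"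

end

theory Submission
  imports Defs "HOL-Computational_Algebra.Primes" "HOL-Computational_Algebra.Formal_Power_Series"
begin

unbundle no vec_syntax
notation fps_nth (infixl "$" 75)


definition multf :: "(nat \<Rightarrow> complex) \<Rightarrow> bool" where
  "multf h \<longleftrightarrow> h 1 = 1 \<and> (\<forall>m n. m > 0 \<longrightarrow> n > 0 \<longrightarrow> coprime m n \<longrightarrow> h (m * n) = h m * h n)"

lemma coprime_primepows:
  assumes "prime (p::nat)" "prime q" "p \<noteq> q"
  shows "coprime (p ^ a) (q ^ b)"
  using assms by (simp add: primes_coprime coprime_power_left_iff coprime_power_right_iff)

lemma multf_prod:
  assumes "multf h" "finite S" "\<forall>p\<in>S. prime p"
  shows "h (\<Prod>p\<in>S. p ^ e p) = (\<Prod>p\<in>S. h (p ^ e p))"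
  using assms(2,3)
proof (induction S rule: finite_induct)
  case empty
  then show ?case using assms(1) by (simp add: multf_def)
next
  case (insert p S)
  have cop: "coprime (p ^ e p) (\<Prod>q\<in>S. q ^ e q)"
  proof (rule prod_coprime_right)
    fix q assume "q \<in> S"
    then show "coprime (p ^ e p) (q ^ e q)" using insert by (intro coprime_primepows) auto
  qed
  have pos1: "p ^ e p > 0" using insert prime_gt_0_nat by auto
  have pos2: "(\<Prod>q\<in>S. q ^ e q) > 0" using insert prime_gt_0_nat
    by (intro prod_pos) auto
  have "h (\<Prod>q\<in>insert p S. q ^ e q) = h (p ^ e p * (\<Prod>q\<in>S. q ^ e q))"
    using insert by simp
  also have "\<dots> = h (p ^ e p) * h (\<Prod>q\<in>S. q ^ e q)"
    using assms(1) cop pos1 pos2 by (simp add: multf_def)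
  finally show ?case using insert by simp
qed

lemma multf_eq:
  assumes "multf h" "n > 0"
  shows "h n = (\<Prod>p\<in>prime_factors n. h (p ^ multiplicity p n))"
proof -
  have "h n = h (\<Prod>p\<in>prime_factors n. p ^ multiplicity p n)"
    using prime_factorization_nat[OF assms(2)] by simp
  also have "\<dots> = (\<Prod>p\<in>prime_factors n. h (p ^ multiplicity p n))"
    by (rule multf_prod[OF assms(1)]) auto
  finally show ?thesis .
qed

lemma multf_unique:
  assumes "multf h" "multf h'" "\<And>p k. prime p \<Longrightarrow> h (p ^ k) = h' (p ^ k)" "n > 0"
  shows "h n = h' n"
  using multf_eq[OF assms(1,4)] multf_eq[OF assms(2,4)] assms(3)
  by (simp add: prime_factors_multiplicity)

definition mk :: "(nat \<Rightarrow> nat \<Rightarrow> complex) \<Rightarrow> nat \<Rightarrow> complex" where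
  "mk \<phi> n = (\<Prod>p\<in>prime_factors n. \<phi> p (multiplicity p n))"

lemma mk_primepow:
  assumes "prime p" "k > 0"
  shows "mk \<phi> (p ^ k) = \<phi> p k"
  using assms by (simp add: mk_def prime_factorization_prime_power)

lemma mk_one: "mk \<phi> 1 = 1" by (simp add: mk_def)

lemma multf_mk: "multf (mk \<phi>)"
  unfolding multf_def
proof (intro conjI allI impI)
  show "mk \<phi> 1 = 1" by (rule mk_one)
  fix m n :: nat assume mn: "m > 0" "n > 0" "coprime m n"
  have disj: "prime_factors m \<inter> prime_factors n = {}"
  proof (rule ccontr)
    assume "prime_factors m \<inter> prime_factors n \<noteq> {}"
    then obtain p where "p \<in> prime_factors m" "p \<in> prime_factors n" by blast
    then have "prime p" "p dvd m" "p dvd n" by auto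
    with mn(3) show False
      by (metis coprime_common_divisor_nat not_prime_1)
  qed
  have pf: "prime_factors (m * n) = prime_factors m \<union> prime_factors n"
    using mn by (simp add: prime_factors_product)
  have mul: "multiplicity p (m * n) = multiplicity p m + multiplicity p n" if "prime p" for p
    using that mn by (simp add: prime_elem_multiplicity_mult_distrib)
  have "mk \<phi> (m * n) = (\<Prod>p\<in>prime_factors m. \<phi> p (multiplicity p (m*n))) *
            (\<Prod>p\<in>prime_factors n. \<phi> p (multiplicity p (m*n)))"
    unfolding mk_def pf by (rule prod.union_disjoint) (use disj in auto)
  also have "(\<Prod>p\<in>prime_factors m. \<phi> p (multiplicity p (m*n))) = mk \<phi> m"
    unfolding mk_def
  proof (rule prod.cong)
    fix p assume p: "p \<in> prime_factors m"
    then have "p \<notin> prime_factors n" using disj by blast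
    then have "multiplicity p n = 0" using p mn
      by (simp add: prime_factors_multiplicity)
    then show "\<phi> p (multiplicity p (m*n)) = \<phi> p (multiplicity p m)"
      using mul[OF in_prime_factors_imp_prime[OF p]] by auto
  qed simp
  also have "(\<Prod>p\<in>prime_factors n. \<phi> p (multiplicity p (m*n))) = mk \<phi> n"
    unfolding mk_def
  proof (rule prod.cong)
    fix p assume p: "p \<in> prime_factors n"
    then have "p \<notin> prime_factors m" using disj by blast
    then have "multiplicity p m = 0" using p mn
      by (simp add: prime_factors_multiplicity)
    then show "\<phi> p (multiplicity p (m*n)) = \<phi> p (multiplicity p n)"
      using mul[OF in_prime_factors_imp_prime[OF p]] by auto
  qed simp
  finally show "mk \<phi> (m * n) = mk \<phi> m * mk \<phi> n" .
qed


lemma gcd_div_aux: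
  assumes "coprime (m::nat) n" "i dvd m" "j dvd n"
  shows "gcd (i*j) m = i"
  using assms by (metis coprime_mult_right_iff dvd_mult_div_cancel
    gcd_mult_left_right_cancel gcd_nat.order_iff)

lemma conv_mult:
  assumes "multf a" "multf b" "m > 0" "n > 0" "coprime m n"
  shows "dirichlet_conv a b (m * n) = dirichlet_conv a b m * dirichlet_conv a b n"
proof -
  let ?D = "\<lambda>x::nat. {k. k dvd x}"
  have fin: "finite (?D x)" if "x > 0" for x using that by (simp add: finite_divisors_nat)
  have inj: "inj_on (\<lambda>(i,j). i*j) (?D m \<times> ?D n)"
  proof (rule inj_onI, clarify)
    fix i j i' j' assume h: "i dvd m" "j dvd n" "i' dvd m" "j' dvd n" "i * j = i' * j'"
    have "i = i'" using gcd_div_aux[OF assms(5) h(1,2)] gcd_div_aux[OF assms(5) h(3,4)] h(5) by simp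
    moreover have "j = j'" using gcd_div_aux[of n m j i] gcd_div_aux[of n m j' i'] h assms(5)
      by (metis coprime_commute mult.commute)
    ultimately show "i = i' \<and> j = j'" by simp
  qed
  have img: "(\<lambda>(i,j). i*j) ` (?D m \<times> ?D n) = ?D (m*n)"
  proof
    show "(\<lambda>(i,j). i*j) ` (?D m \<times> ?D n) \<subseteq> ?D (m*n)" by (auto intro: mult_dvd_mono)
    show "?D (m*n) \<subseteq> (\<lambda>(i,j). i*j) ` (?D m \<times> ?D n)"
    proof
      fix k assume "k \<in> ?D (m*n)"
      then have "k dvd m * n" by simp
      then obtain i j where "k = i * j" "i dvd m" "j dvd n" using division_decomp by blast
      then show "k \<in> (\<lambda>(i,j). i*j) ` (?D m \<times> ?D n)" by force
    qed
  qed
  have "dirichlet_conv a b m * dirichlet_conv a b n =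
        (\<Sum>(i,j)\<in>?D m \<times> ?D n. (a i * b (m div i)) * (a j * b (n div j)))"
    unfolding dirichlet_conv_def by (simp add: sum_product sum.cartesian_product)
  also have "\<dots> = (\<Sum>(i,j)\<in>?D m \<times> ?D n. a (i*j) * b (m*n div (i*j)))"
  proof -
    have key: "(a i * b (m div i)) * (a j * b (n div j)) = a (i*j) * b (m*n div (i*j))"
      if ij: "i \<in> ?D m" "j \<in> ?D n" for i j
    proof -
    from ij have d: "i dvd m" "j dvd n" by auto
    have ipos: "i > 0" "j > 0" using d assms(3,4) by (auto intro: Nat.gr0I)
    have cij: "coprime i j" using d assms(5) coprime_divisors by blast
    have c2: "coprime (m div i) (n div j)" using d assms(5)
      by (metis coprime_divisors dvd_mult_div_cancel dvd_triv_right)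
    have q: "m*n div (i*j) = (m div i) * (n div j)" using d by (simp add: div_mult_div_if_dvd)
    have qpos: "m div i > 0" "n div j > 0" using d assms(3,4)
      by (auto simp: dvd_div_eq_0_iff)
    show "(a i * b (m div i)) * (a j * b (n div j)) = a (i*j) * b (m*n div (i*j))"
      using assms(1,2) ipos cij c2 qpos unfolding q multf_def by simp
    qed
    show ?thesis by (intro sum.cong) (auto simp: key)
  qed
  also have "\<dots> = (\<Sum>k\<in>?D (m*n). a k * b (m*n div k))"
    using sum.reindex[OF inj, of "\<lambda>k. a k * b (m*n div k)"] img by (simp add: case_prod_unfold)
  finally show ?thesis unfolding dirichlet_conv_def by simp
qed

lemma multf_conv:
  assumes "multf a" "multf b"
  shows "multf (dirichlet_conv a b)"
proof -
  have "dirichlet_conv a b 1 = 1"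
    using assms by (simp add: dirichlet_conv_def multf_def)
  then show ?thesis using conv_mult[OF assms] unfolding multf_def by blast
qed

lemma conv_primepow:
  assumes "prime p"
  shows "dirichlet_conv a b (p ^ k) = (\<Sum>i=0..k. a (p ^ i) * b (p ^ (k - i)))"
proof -
  have D: "{d. d dvd p ^ k} = (\<lambda>i. p ^ i) ` {0..k}"
    using divides_primepow_nat[OF assms] by auto
  have inj: "inj_on (\<lambda>i. p ^ i) {0..k}"
    using prime_gt_1_nat[OF assms] by (intro inj_onI) simp
  have "dirichlet_conv a b (p ^ k) = (\<Sum>i=0..k. a (p ^ i) * b (p ^ k div p ^ i))"
    unfolding dirichlet_conv_def D by (subst sum.reindex[OF inj]) simp
  also have "\<dots> = (\<Sum>i=0..k. a (p ^ i) * b (p ^ (k - i)))"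
    using assms by (intro sum.cong) (auto simp: power_diff prime_gt_0_nat)
  finally show ?thesis .
qed

lemma multf_unit: "multf dirichlet_unit"
  unfolding multf_def dirichlet_unit_def by auto

lemma cm_multf: "completely_multiplicative h \<Longrightarrow> multf h"
  unfolding multf_def completely_multiplicative_def by auto

lemma multf_conv_list:
  assumes "\<forall>h\<in>set fs. completely_multiplicative h"
  shows "multf (conv_list fs)"
  using assms
proof (induction fs)
  case Nil
  then show ?case by (simp add: conv_list_def multf_unit)
next
  case (Cons a fs)
  then show ?case unfolding conv_list_def by (simp add: multf_conv cm_multf)
qed



definition geomf :: "complex \<Rightarrow> complex fps" where
  "geomf c = Abs_fps (\<lambda>k. c ^ k)"

definition lin :: "complex \<Rightarrow> complex fps" where
  "lin c = 1 - fps_const c * fps_X"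

definition T :: "nat \<Rightarrow> complex fps \<Rightarrow> real \<Rightarrow> real" where
  "T N A r = (\<Sum>k\<le>N. cmod (A $ k) * r ^ k)"

lemma lin_nth: "lin c $ k = (if k = 0 then 1 else if k = 1 then - c else 0)"
  by (simp add: lin_def)

lemma lin_mult_nth: "(lin c * A) $ k = (if k = 0 then A $ 0 else A $ k - c * A $ (k - 1))"
proof -
  have "lin c * A = A - fps_const c * (fps_X * A)"
    by (simp add: lin_def algebra_simps)
  then show ?thesis by (simp add: fps_X_mult_nth)
qed

lemma lin_geomf: "lin c * geomf c = 1"
proof (rule fps_ext)
  fix k
  show "(lin c * geomf c) $ k = 1 $ k"
    by (cases k) (simp_all add: lin_mult_nth geomf_def lin_nth)
qed

lemma T_nonneg: "r \<ge> 0 \<Longrightarrow> T N A r \<ge> 0"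
  unfolding T_def by (intro sum_nonneg) auto

lemma T_one: "T N 1 r = 1"
proof -
  have "T N 1 r = (\<Sum>k\<in>{0}. cmod ((1::complex fps) $ k) * r ^ k)"
    unfolding T_def by (rule sum.mono_neutral_right) auto
  then show ?thesis by simp
qed

lemma T_mult:
  assumes "r \<ge> 0"
  shows "T N (A * B) r \<le> T N A r * T N B r"
proof -
  define g where "g i j = cmod (A $ i) * r ^ i * (cmod (B $ j) * r ^ j)" for i j
  have g0: "g i j \<ge> 0" for i j unfolding g_def using assms by simp
  have "T N (A * B) r = (\<Sum>k\<le>N. cmod (\<Sum>i\<le>k. A $ i * B $ (k - i)) * r ^ k)"
    unfolding T_def fps_mult_nth by (simp add: atLeast0AtMost)
  also have "\<dots> \<le> (\<Sum>k\<le>N. \<Sum>i\<le>k. g i (k - i))"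
  proof (rule sum_mono)
    fix k assume "k \<in> {..N}"
    have "cmod (\<Sum>i\<le>k. A $ i * B $ (k - i)) * r ^ k \<le> (\<Sum>i\<le>k. cmod (A $ i * B $ (k - i))) * r ^ k"
      using assms by (intro mult_right_mono norm_sum) auto
    also have "\<dots> = (\<Sum>i\<le>k. g i (k - i))"
      unfolding sum_distrib_right g_def
    proof (rule sum.cong[OF refl])
      fix i assume "i \<in> {..k}"
      then have "r ^ k = r ^ i * r ^ (k - i)" by (simp add: power_add[symmetric])
      then show "cmod (A $ i * B $ (k - i)) * r ^ k = cmod (A $ i) * r ^ i * (cmod (B $ (k - i)) * r ^ (k - i))"
        by (simp add: norm_mult)
    qed
    finally show "cmod (\<Sum>i\<le>k. A $ i * B $ (k - i)) * r ^ k \<le> (\<Sum>i\<le>k. g i (k - i))" .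
  qed
  also have "\<dots> = (\<Sum>(i,j)\<in>{(i,j). i+j \<le> N}. g i j)"
    by (rule sum.triangle_reindex_eq[symmetric])
  also have "\<dots> \<le> (\<Sum>(i,j)\<in>{..N} \<times> {..N}. g i j)"
    by (rule sum_mono2) (auto simp: g0)
  also have "\<dots> = T N A r * T N B r"
    unfolding T_def g_def by (simp add: sum_product sum.cartesian_product)
  finally show ?thesis .
qed

lemma T_trunc:
  assumes "r \<ge> 0" "\<And>k. k > M \<Longrightarrow> A $ k = 0"
  shows "T N A r \<le> T M A r"
proof -
  have "T N A r = (\<Sum>k\<in>{..N} \<inter> {..M}. cmod (A $ k) * r ^ k)"
    unfolding T_def by (rule sum.mono_neutral_right) (auto simp: assms(2) not_le)
  also have "\<dots> \<le> T M A r"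
    unfolding T_def using assms(1) by (intro sum_mono2) auto
  finally show ?thesis .
qed

lemma T_geomf:
  assumes "0 \<le> r" "r < 1" "cmod c \<le> 1"
  shows "T N (geomf c) r \<le> 1 / (1 - r)"
proof -
  have "T N (geomf c) r \<le> (\<Sum>k<Suc N. r ^ k)"
    unfolding T_def geomf_def lessThan_Suc_atMost
    using assms by (intro sum_mono) (auto simp: norm_power intro!: mult_left_le_one_le power_le_one)
  also have "\<dots> = (1 - r ^ Suc N) / (1 - r)"
    using assms by (subst sum_gp_strict) auto
  also have "\<dots> \<le> 1 / (1 - r)"
    using assms by (intro divide_right_mono) auto
  finally show ?thesis .
qed

lemma T_lin:
  assumes "0 \<le> r" "r \<le> 1" "cmod c \<le> 1"
  shows "T N (lin c) r \<le> 2"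
proof -
  have "T N (lin c) r \<le> T 1 (lin c) r"
    using assms by (intro T_trunc) (auto simp: lin_nth)
  also have "T 1 (lin c) r = 1 + cmod c * r"
    by (simp add: T_def lin_nth atMost_Suc)
  also have "\<dots> \<le> 2" using assms mult_mono[of "cmod c" 1 r 1] by simp
  finally show ?thesis .
qed

lemma T_prod_geomf:
  assumes "0 \<le> r" "r < 1" "\<forall>c\<in>set cs. cmod c \<le> 1"
  shows "T N (prod_list (map geomf cs)) r \<le> (1 / (1 - r)) ^ length cs"
  using assms(3)
proof (induction cs)
  case Nil
  then show ?case by (simp add: T_one)
next
  case (Cons c cs)
  have "T N (prod_list (map geomf (c # cs))) r \<le> T N (geomf c) r * T N (prod_list (map geomf cs)) r"
    using T_mult assms by simp
  also have "\<dots> \<le> (1 / (1 - r)) * (1 / (1 - r)) ^ length cs"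
    using Cons assms by (intro mult_mono T_geomf T_nonneg) auto
  finally show ?case by simp
qed

lemma T_prod_lin:
  assumes "0 \<le> r" "r < 1" "\<forall>c\<in>set cs. cmod c \<le> 1"
  shows "T N (prod_list (map lin cs)) r \<le> 2 ^ length cs"
  using assms(3)
proof (induction cs)
  case Nil
  then show ?case by (simp add: T_one)
next
  case (Cons c cs)
  have "T N (prod_list (map lin (c # cs))) r \<le> T N (lin c) r * T N (prod_list (map lin cs)) r"
    using T_mult assms by simp
  also have "\<dots> \<le> 2 * 2 ^ length cs"
    using Cons assms by (intro mult_mono T_lin T_nonneg) auto
  finally show ?case by simp
qed

lemma prod_lin_nth: "k > length cs \<Longrightarrow> prod_list (map lin cs) $ k = 0"
proof (induction cs arbitrary: k)
  case Nil
  then show ?case by simp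
next
  case (Cons c cs)
  then show ?case by (simp add: lin_mult_nth)
qed

lemma prod_lin_geomf: "prod_list (map lin cs) * prod_list (map geomf cs) = 1"
proof (induction cs)
  case Nil
  then show ?case by simp
next
  case (Cons c cs)
  have "prod_list (map lin (c # cs)) * prod_list (map geomf (c # cs)) =
        (lin c * geomf c) * (prod_list (map lin cs) * prod_list (map geomf cs))"
    by (simp add: algebra_simps)
  then show ?case using Cons lin_geomf by simp
qed

lemma local_bound:
  assumes "0 \<le> r" "r < 1" "\<forall>c\<in>set as. cmod c \<le> 1" "\<forall>c\<in>set bs. cmod c \<le> 1"
    "length as = d" "length bs = d"
  defines "F \<equiv> prod_list (map geomf as)" and "G \<equiv> prod_list (map geomf bs)"
    and "P \<equiv> prod_list (map lin as)" and "Q \<equiv> prod_list (map lin bs)"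
  shows "T N (G * P - 1) r \<le> (1 / (1 - r)) ^ d * 4 ^ d * T d (G - F) r"
proof -
  have PF: "P * F = 1" and QG: "Q * G = 1" unfolding P_def F_def Q_def G_def
    by (rule prod_lin_geomf)+
  have e1: "G * P - 1 = G * (P - Q)"
    using QG by (simp add: algebra_simps)
  have e2: "P - Q = (G - F) * P * Q"
  proof -
    have "(G - F) * P * Q = (Q * G) * P - (P * F) * Q" by (simp add: algebra_simps)
    then show ?thesis using PF QG by simp
  qed
  have z: "(P - Q) $ k = 0" if "k > d" for k
    using that assms(5,6) prod_lin_nth unfolding P_def Q_def by simp
  have "T N (G * P - 1) r \<le> T N G r * T N (P - Q) r"
    unfolding e1 using assms by (intro T_mult) auto
  also have "\<dots> \<le> (1 / (1 - r)) ^ d * T d (P - Q) r"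
    using assms T_prod_geomf[of r bs N] z unfolding G_def
    by (intro mult_mono T_trunc T_nonneg) auto
  also have "T d (P - Q) r \<le> T d (G - F) r * 2 ^ d * 2 ^ d"
  proof -
    have "T d (P - Q) r \<le> T d ((G - F) * P) r * T d Q r"
      unfolding e2 using assms by (intro T_mult) auto
    also have "\<dots> \<le> (T d (G - F) r * T d P r) * T d Q r"
      using assms by (intro mult_right_mono T_mult T_nonneg) auto
    also have "\<dots> \<le> (T d (G - F) r * 2 ^ d) * 2 ^ d"
      using assms T_prod_lin[of r as d] T_prod_lin[of r bs d] unfolding P_def Q_def
      by (intro mult_mono T_nonneg mult_nonneg_nonneg) auto
    finally show ?thesis .
  qed
  then have "(1 / (1 - r)) ^ d * T d (P - Q) r \<le> (1 / (1 - r)) ^ d * (T d (G - F) r * 2 ^ d * 2 ^ d)"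
    using assms by (intro mult_left_mono) auto
  also have "\<dots> = (1 / (1 - r)) ^ d * 4 ^ d * T d (G - F) r"
    by (simp add: power_mult_distrib[symmetric] algebra_simps)
  finally show ?thesis by simp
qed



definition loc :: "(nat \<Rightarrow> complex) \<Rightarrow> nat \<Rightarrow> complex fps" where
  "loc a p = Abs_fps (\<lambda>k. a (p ^ k))"

lemma loc_conv: "prime p \<Longrightarrow> loc (dirichlet_conv a b) p = loc a p * loc b p"
  by (rule fps_ext) (simp add: loc_def conv_primepow fps_mult_nth)

lemma cm_power:
  assumes "completely_multiplicative a" "p > 0"
  shows "a (p ^ k) = a p ^ k"
proof (induction k)
  case 0
  then show ?case using assms by (simp add: completely_multiplicative_def)
next
  case (Suc k)
  have "a (p ^ Suc k) = a (p * p ^ k)" by simp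
  also have "\<dots> = a p * a (p ^ k)" using assms by (simp add: completely_multiplicative_def)
  finally show ?case using Suc by simp
qed

lemma loc_cm: "completely_multiplicative a \<Longrightarrow> prime p \<Longrightarrow> loc a p = geomf (a p)"
  by (rule fps_ext) (simp add: loc_def geomf_def cm_power prime_gt_0_nat)

lemma loc_unit: "prime p \<Longrightarrow> loc dirichlet_unit p = 1"
proof (rule fps_ext)
  fix k assume p: "prime p"
  then have "p ^ k = 1 \<longleftrightarrow> k = 0" using prime_gt_1_nat[OF p]
    by (metis power_0 power_inject_exp)
  then show "loc dirichlet_unit p $ k = 1 $ k"
    by (simp add: loc_def dirichlet_unit_def)
qed

lemma loc_conv_list:
  assumes "\<forall>a\<in>set fs. completely_multiplicative a" "prime p"
  shows "loc (conv_list fs) p = prod_list (map geomf (map (\<lambda>a. a p) fs))"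
  using assms(1)
proof (induction fs)
  case Nil
  then show ?case using assms(2) by (simp add: conv_list_def loc_unit)
next
  case (Cons a fs)
  then show ?case using assms(2) unfolding conv_list_def
    by (simp add: loc_conv loc_cm)
qed

lemma prod_lin_0: "prod_list (map lin cs) $ 0 = 1"
  by (induction cs) (simp_all add: lin_mult_nth lin_nth)

lemma prod_geomf_0: "prod_list (map geomf cs) $ 0 = 1"
  by (induction cs) (simp_all add: fps_mult_nth geomf_def)

definition Fp :: "(nat \<Rightarrow> complex) list \<Rightarrow> nat \<Rightarrow> complex fps" where
  "Fp fs p = prod_list (map geomf (map (\<lambda>a. a p) fs))"
definition Pp :: "(nat \<Rightarrow> complex) list \<Rightarrow> nat \<Rightarrow> complex fps" where
  "Pp fs p = prod_list (map lin (map (\<lambda>a. a p) fs))"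
definition hh :: "(nat \<Rightarrow> complex) list \<Rightarrow> (nat \<Rightarrow> complex) list \<Rightarrow> nat \<Rightarrow> complex" where
  "hh fs gs = mk (\<lambda>p k. (Fp gs p * Pp fs p) $ k)"

lemma Fp_0: "Fp fs p $ 0 = 1" unfolding Fp_def by (rule prod_geomf_0)
lemma Pp_0: "Pp fs p $ 0 = 1" unfolding Pp_def by (rule prod_lin_0)
lemma H_0: "(Fp gs p * Pp fs p) $ 0 = 1" by (simp add: fps_mult_nth Fp_0 Pp_0)

lemma hh_primepow:
  assumes "prime p"
  shows "hh fs gs (p ^ k) = (Fp gs p * Pp fs p) $ k"
proof (cases "k = 0")
  case True
  have "hh fs gs (p ^ k) = 1" unfolding True power_0 hh_def by (rule mk_one)
  then show ?thesis using True H_0 by simp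
next
  case False
  then show ?thesis using assms by (simp add: hh_def mk_primepow)
qed

lemma loc_hh: "prime p \<Longrightarrow> loc (hh fs gs) p = Fp gs p * Pp fs p"
  by (rule fps_ext) (simp add: loc_def hh_primepow)

lemma conv_eq:
  assumes "\<forall>a\<in>set fs. completely_multiplicative a" "\<forall>a\<in>set gs. completely_multiplicative a"
    "n > 0"
  shows "conv_list gs n = dirichlet_conv (hh fs gs) (conv_list fs) n"
proof (rule multf_unique[OF _ _ _ assms(3)])
  show "multf (conv_list gs)" using assms(2) by (rule multf_conv_list)
  show "multf (dirichlet_conv (hh fs gs) (conv_list fs))"
    using assms(1) by (intro multf_conv multf_conv_list) (simp_all add: hh_def multf_mk)
  fix p k :: nat assume p: "prime p"
  have "loc (dirichlet_conv (hh fs gs) (conv_list fs)) p = (Fp gs p * Pp fs p) * Fp fs p"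
    using p assms(1) by (simp add: loc_conv loc_hh loc_conv_list Fp_def)
  also have "\<dots> = Fp gs p * (Pp fs p * Fp fs p)" by (simp add: algebra_simps)
  also have "\<dots> = Fp gs p" unfolding Pp_def Fp_def prod_lin_geomf by simp
  also have "\<dots> = loc (conv_list gs) p" using p assms(2) by (simp add: loc_conv_list Fp_def)
  finally have "loc (conv_list gs) p $ k = loc (dirichlet_conv (hh fs gs) (conv_list fs)) p $ k"
    by simp
  then show "conv_list gs (p ^ k) = dirichlet_conv (hh fs gs) (conv_list fs) (p ^ k)"
    by (simp add: loc_def)
qed

lemma hh_local_bound:
  assumes "\<forall>a\<in>set fs. completely_multiplicative a" "\<forall>a\<in>set gs. completely_multiplicative a"
    "\<forall>a\<in>set fs. cmod (a p) \<le> 1" "\<forall>a\<in>set gs. cmod (a p) \<le> 1"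
    "length fs = d" "length gs = d" "prime p" "0 \<le> r" "r < 1"
  shows "(\<Sum>e=1..N. cmod (hh fs gs (p ^ e)) * r ^ e)
         \<le> (1 / (1 - r)) ^ d * 4 ^ d *
           (\<Sum>k=1..d. cmod (conv_list gs (p ^ k) - conv_list fs (p ^ k)) * r ^ k)"
proof -
  let ?H = "Fp gs p * Pp fs p"
  have "(\<Sum>e=1..N. cmod (hh fs gs (p ^ e)) * r ^ e) = T N (?H - 1) r"
  proof -
    have "T N (?H - 1) r = (\<Sum>k\<in>insert 0 {1..N}. cmod ((?H - 1) $ k) * r ^ k)"
      unfolding T_def by (rule sum.cong) auto
    also have "\<dots> = (\<Sum>k=1..N. cmod ((?H - 1) $ k) * r ^ k)"
      using H_0[of gs p fs] by simp
    also have "\<dots> = (\<Sum>e=1..N. cmod (hh fs gs (p ^ e)) * r ^ e)"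
      using assms(7) by (intro sum.cong) (auto simp: hh_primepow)
    finally show ?thesis by simp
  qed
  also have "\<dots> \<le> (1 / (1 - r)) ^ d * 4 ^ d * T d (Fp gs p - Fp fs p) r"
    unfolding Fp_def Pp_def
    by (rule local_bound) (use assms in auto)
  also have "T d (Fp gs p - Fp fs p) r =
      (\<Sum>k=1..d. cmod (conv_list gs (p ^ k) - conv_list fs (p ^ k)) * r ^ k)"
  proof -
    have e: "Fp gs p - Fp fs p = loc (conv_list gs) p - loc (conv_list fs) p"
      using assms by (simp add: loc_conv_list Fp_def)
    have "T d (Fp gs p - Fp fs p) r = (\<Sum>k\<in>insert 0 {1..d}. cmod ((Fp gs p - Fp fs p) $ k) * r ^ k)"
      unfolding T_def by (rule sum.cong) auto
    also have "\<dots> = (\<Sum>k=1..d. cmod ((Fp gs p - Fp fs p) $ k) * r ^ k)"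
      by (simp add: Fp_0)
    finally show ?thesis unfolding e by (simp add: loc_def)
  qed
  finally show ?thesis .
qed


lemma powr_pow_swap:
  assumes "(x::real) > 0"
  shows "(x powr a) ^ e = (x ^ e) powr a"
  using assms by (simp add: powr_power powr_realpow[symmetric] powr_powr mult.commute)

lemma mult_le_N:
  assumes "prime (p::nat)" "1 \<le> k" "k \<le> N"
  shows "multiplicity p k \<le> N"
proof -
  have "p ^ multiplicity p k dvd k" by (rule multiplicity_dvd)
  then have "p ^ multiplicity p k \<le> k" using assms(2) by (intro dvd_imp_le) auto
  moreover have "multiplicity p k < p ^ multiplicity p k"
  proof -
    have "multiplicity p k < 2 ^ multiplicity p k" by (rule less_exp)
    also have "\<dots> \<le> p ^ multiplicity p k" using prime_ge_2_nat[OF assms(1)] by (rule power_mono) simp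
    finally show ?thesis .
  qed
  ultimately show ?thesis using assms(3) by linarith
qed

lemma euler_bound:
  fixes h :: "nat \<Rightarrow> complex" and \<beta> :: real
  assumes "multf h"
    and bnd: "\<And>p M. prime p \<Longrightarrow> (\<Sum>e=1..M. cmod (h (p ^ e)) * (real p powr (-\<beta>)) ^ e) \<le> a p"
  shows "(\<Sum>k=1..N. cmod (h k) * real k powr (-\<beta>)) \<le> exp (\<Sum>p\<in>{p. prime p \<and> p \<le> N}. a p)"
proof -
  define P where "P = {p. prime p \<and> p \<le> N}"
  have finP: "finite P" unfolding P_def by auto
  define w where "w p e = cmod (h (p ^ e)) * (real p powr (-\<beta>)) ^ e" for p e
  have w0: "w p 0 = 1" for p using assms(1) by (simp add: w_def multf_def)
  have wnn: "w p e \<ge> 0" for p e by (simp add: w_def)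
  define \<psi> where "\<psi> k = restrict (\<lambda>p. multiplicity p k) P" for k
  have \<psi>in: "\<psi> k \<in> PiE P (\<lambda>_. {..N})" if "k \<in> {1..N}" for k
    using that mult_le_N unfolding \<psi>_def P_def by auto
  have inj: "inj_on \<psi> {1..N}"
  proof (rule inj_onI)
    fix k k' assume k: "k \<in> {1..N}" "k' \<in> {1..N}" "\<psi> k = \<psi> k'"
    have "multiplicity p k = multiplicity p k'" if "prime p" for p
    proof (cases "p \<le> N")
      case True
      then have "p \<in> P" using that by (simp add: P_def)
      then show ?thesis using fun_cong[OF k(3), of p] by (simp add: \<psi>_def)
    next
      case False
      then have "\<not> p dvd k" "\<not> p dvd k'" using k by (auto dest: dvd_imp_le)
      then show ?thesis by (simp add: not_dvd_imp_multiplicity_0)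
    qed
    then have "normalize k = normalize k'"
      using k by (intro multiplicity_eq_imp_eq) auto
    then show "k = k'" by simp
  qed
  have val: "(\<Prod>p\<in>P. w p (\<psi> k p)) = cmod (h k) * real k powr (-\<beta>)" if k: "k \<in> {1..N}" for k
  proof -
    have sub: "prime_factors k \<subseteq> P"
    proof
      fix q assume q: "q \<in> prime_factors k"
      then have "prime q" "q dvd k" by auto
      then have "q \<le> k" using k by (intro dvd_imp_le) auto
      then show "q \<in> P" using k \<open>prime q\<close> by (simp add: P_def)
    qed
    have "(\<Prod>p\<in>P. w p (\<psi> k p)) = (\<Prod>p\<in>P. w p (multiplicity p k))"
      by (simp add: \<psi>_def)
    also have "\<dots> = (\<Prod>p\<in>prime_factors k. w p (multiplicity p k))"
    proof (rule prod.mono_neutral_right[OF finP sub])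
      show "\<forall>i\<in>P - prime_factors k. w i (multiplicity i k) = 1"
      proof
        fix i assume i: "i \<in> P - prime_factors k"
        then have "prime i" by (simp add: P_def)
        then have "multiplicity i k = 0" using i k by (auto simp: prime_factors_multiplicity)
        then show "w i (multiplicity i k) = 1" by (simp add: w0)
      qed
    qed
    also have "\<dots> = (\<Prod>p\<in>prime_factors k. cmod (h (p ^ multiplicity p k))) *
                     (\<Prod>p\<in>prime_factors k. real (p ^ multiplicity p k) powr (-\<beta>))"
      unfolding w_def prod.distrib
      by (intro arg_cong2[where f="(*)"] prod.cong refl)
         (auto intro!: powr_pow_swap simp: prime_gt_0_nat dest: in_prime_factors_imp_prime)
    also have "(\<Prod>p\<in>prime_factors k. cmod (h (p ^ multiplicity p k))) = cmod (h k)"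
      using multf_eq[OF assms(1), of k] k by (simp add: prod_norm)
    also have "(\<Prod>p\<in>prime_factors k. real (p ^ multiplicity p k) powr (-\<beta>)) = real k powr (-\<beta>)"
    proof -
      have "(\<Prod>p\<in>prime_factors k. real (p ^ multiplicity p k) powr (-\<beta>)) =
            (\<Prod>p\<in>prime_factors k. real (p ^ multiplicity p k)) powr (-\<beta>)"
        by (rule prod_powr_distrib[symmetric])
      also have "(\<Prod>p\<in>prime_factors k. real (p ^ multiplicity p k)) = real k"
        using prime_factorization_nat[of k] k by (simp del: of_nat_power add: of_nat_prod[symmetric])
      finally show ?thesis .
    qed
    finally show ?thesis .
  qed
  have "(\<Sum>k=1..N. cmod (h k) * real k powr (-\<beta>)) = (\<Sum>k=1..N. \<Prod>p\<in>P. w p (\<psi> k p))"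
    by (intro sum.cong) (auto simp: val)
  also have "\<dots> = (\<Sum>\<phi>\<in>\<psi> ` {1..N}. \<Prod>p\<in>P. w p (\<phi> p))"
    by (rule sum.reindex[OF inj, symmetric, unfolded comp_def])
  also have "\<dots> \<le> (\<Sum>\<phi>\<in>PiE P (\<lambda>_. {..N}). \<Prod>p\<in>P. w p (\<phi> p))"
  proof (rule sum_mono2)
    show "finite (PiE P (\<lambda>_. {..N}))" using finP by (intro finite_PiE) auto
    show "\<psi> ` {1..N} \<subseteq> PiE P (\<lambda>_. {..N})" using \<psi>in by blast
  qed (auto intro!: prod_nonneg simp: wnn)
  also have "\<dots> = (\<Prod>p\<in>P. \<Sum>e\<le>N. w p e)"
    by (rule prod_sum_PiE[symmetric]) (use finP in auto)
  also have "\<dots> \<le> (\<Prod>p\<in>P. exp (a p))"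
  proof (rule prod_mono)
    fix p assume p: "p \<in> P"
    have "(\<Sum>e\<le>N. w p e) = (\<Sum>e\<in>insert 0 {1..N}. w p e)" by (rule sum.cong) auto
    also have "\<dots> = 1 + (\<Sum>e=1..N. w p e)" by (simp add: w0)
    also have "\<dots> \<le> 1 + a p" using bnd[of p N] p by (simp add: P_def w_def)
    also have "\<dots> \<le> exp (a p)" by simp
    finally show "0 \<le> (\<Sum>e\<le>N. w p e) \<and> (\<Sum>e\<le>N. w p e) \<le> exp (a p)"
      by (simp add: sum_nonneg wnn)
  qed
  also have "\<dots> = exp (\<Sum>p\<in>P. a p)" by (simp add: exp_sum finP)
  finally show ?thesis unfolding P_def .
qed

lemma swap_sum:
  fixes \<phi> :: "nat \<Rightarrow> nat \<Rightarrow> complex"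
  shows "(\<Sum>n=1..N. \<Sum>k | k dvd n. \<phi> k (n div k)) = (\<Sum>k=1..N. \<Sum>m=1..N div k. \<phi> k m)"
proof -
  have "(\<Sum>n=1..N. \<Sum>k | k dvd n. \<phi> k (n div k)) = (\<Sum>(n,k)\<in>Sigma {1..N} (\<lambda>n. {k. k dvd n}). \<phi> k (n div k))"
    by (rule sum.Sigma) (auto simp: finite_divisors_nat)
  also have "\<dots> = (\<Sum>(k,m)\<in>Sigma {1..N} (\<lambda>k. {1..N div k}). \<phi> k m)"
  proof -
    have H1: "1 \<le> k * m \<and> k * m \<le> N" if "1 \<le> k" "k \<le> N" "1 \<le> m" "m \<le> N div k" for k m
    proof -
      have "k * m \<le> k * (N div k)" using that by simp
      also have "\<dots> \<le> N" by simp
      finally show ?thesis using that by simp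
    qed
    have H2: "1 \<le> k \<and> k \<le> N \<and> 1 \<le> n div k \<and> n div k \<le> N div k"
      if "1 \<le> n" "n \<le> N" "k dvd n" for n k
    proof -
      have kpos: "k > 0" using that by (auto intro: Nat.gr0I)
      have kn: "k \<le> n" using that by (auto intro: dvd_imp_le)
      have "n div k \<ge> 1" using div_le_mono[OF kn, of k] kpos by simp
      moreover have "n div k \<le> N div k" using that by (simp add: div_le_mono)
      ultimately show ?thesis using kpos kn that by auto
    qed
    show ?thesis
    proof (rule sum.reindex_bij_witness[where i="\<lambda>(k,m). (k*m, k)" and j="\<lambda>(n,k). (k, n div k)"], goal_cases)
      case (1 a) then show ?case by auto
    next
      case (2 a) then show ?case by (cases a) (use H2 in auto)
    next
      case (3 b) then show ?case by (cases b) auto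
    next
      case (4 b) then show ?case by (cases b) (use H1 in auto)
    next
      case (5 a) then show ?case by (cases a) auto
    qed
  qed
  also have "\<dots> = (\<Sum>k=1..N. \<Sum>m=1..N div k. \<phi> k m)"
    by (rule sum.Sigma[symmetric]) auto
  finally show ?thesis .
qed


lemma Sf_bound:
  assumes "(\<lambda>x. cmod (summatory f x)) \<in> O[at_top](\<lambda>x. x powr \<alpha>)"
  obtains C where "C > 0" "\<And>y. y \<ge> 1 \<Longrightarrow> cmod (summatory f y) \<le> C * y powr \<alpha>"
proof -
  obtain c where c: "c > 0" "eventually (\<lambda>x. norm (cmod (summatory f x)) \<le> c * norm (x powr \<alpha>)) at_top"
    using landau_o.bigE[OF assms] by blast
  then obtain X0 where X0: "\<And>x. x \<ge> X0 \<Longrightarrow> cmod (summatory f x) \<le> c * norm (x powr \<alpha>)"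
    unfolding eventually_at_top_linorder by auto
  define X1 where "X1 = max X0 1"
  define M0 where "M0 = (\<Sum>n=1..nat \<lceil>X1\<rceil>. cmod (f n))"
  define m where "m = min 1 (X1 powr \<alpha>)"
  have X1: "X1 \<ge> 1" by (simp add: X1_def)
  have mpos: "m > 0" using X1 by (simp add: m_def)
  have M0: "M0 \<ge> 0" unfolding M0_def by (intro sum_nonneg) auto
  define C where "C = max c (M0 / m)"
  have "C > 0" using c by (simp add: C_def)
  moreover have "cmod (summatory f y) \<le> C * y powr \<alpha>" if y: "y \<ge> 1" for y
  proof (cases "y \<ge> X0")
    case True
    then have "cmod (summatory f y) \<le> c * y powr \<alpha>" using X0[of y] y by simp
    also have "\<dots> \<le> C * y powr \<alpha>" by (intro mult_right_mono) (auto simp: C_def)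
    finally show ?thesis .
  next
    case False
    then have yX: "y \<le> X1" by (simp add: X1_def)
    have "cmod (summatory f y) \<le> (\<Sum>n=1..nat \<lfloor>y\<rfloor>. cmod (f n))"
      unfolding summatory_def by (rule norm_sum)
    also have "\<dots> \<le> M0"
    proof -
      have "real_of_int \<lfloor>y\<rfloor> \<le> y" by (rule of_int_floor_le)
      then have "\<lfloor>y\<rfloor> \<le> \<lceil>X1\<rceil>" using yX by linarith
      then have "nat \<lfloor>y\<rfloor> \<le> nat \<lceil>X1\<rceil>" by (rule nat_mono)
      then show ?thesis unfolding M0_def by (intro sum_mono2) auto
    qed
    also have "M0 = (M0 / m) * m" using mpos by simp
    also have "\<dots> \<le> C * y powr \<alpha>"
    proof (rule mult_mono)
      show "M0 / m \<le> C" by (simp add: C_def)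
      show "m \<le> y powr \<alpha>"
      proof (cases "\<alpha> \<ge> 0")
        case True
        then have "1 \<le> y powr \<alpha>" using y by (intro ge_one_powr_ge_zero)
        then show ?thesis by (simp add: m_def)
      next
        case False
        then have "X1 powr \<alpha> \<le> y powr \<alpha>" using y yX by (intro powr_mono2') auto
        then show ?thesis by (simp add: m_def)
      qed
      show "0 \<le> C" using \<open>C > 0\<close> by simp
      show "0 \<le> m" using mpos by simp
    qed
    finally show ?thesis .
  qed
  ultimately show ?thesis using that by blast
qed

lemma floor_div_nat:
  assumes "x \<ge> 0" "k > 0"
  shows "nat \<lfloor>x / real k\<rfloor> = nat \<lfloor>x\<rfloor> div k"
proof -
  have "\<lfloor>x / real_of_int (int k)\<rfloor> = \<lfloor>x\<rfloor> div int k"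
    by (rule floor_divide_real_eq_div) simp
  then have "\<lfloor>x / real k\<rfloor> = \<lfloor>x\<rfloor> div int k" by simp
  then show ?thesis using assms by (simp add: nat_div_distrib)
qed

theorem theorem4:
  fixes d :: nat and f g :: "nat \<Rightarrow> complex" and \<alpha> \<beta> :: real
  assumes "d \<ge> 1"
    and "f \<in> S_deg d" and "g \<in> S_deg d"
    and "\<beta> > 0"
    and "Dhat_term \<beta> d f g summable_on {p::nat. prime p}"
    and "(\<lambda>x. cmod (summatory f x)) \<in> O[at_top](\<lambda>x. x powr \<alpha>)"
  shows "(\<lambda>x. cmod (summatory g x)) \<in> O[at_top](\<lambda>x. x powr (max \<alpha> \<beta>))"
proof -
  obtain fs where fs: "length fs = d" "\<forall>h\<in>set fs. completely_multiplicative h \<and> (\<forall>n>0. cmod (h n) \<le> 1)"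
      "\<forall>n>0. f n = conv_list fs n"
    using assms(2) unfolding S_deg_def by blast
  obtain gs where gs: "length gs = d" "\<forall>h\<in>set gs. completely_multiplicative h \<and> (\<forall>n>0. cmod (h n) \<le> 1)"
      "\<forall>n>0. g n = conv_list gs n"
    using assms(3) unfolding S_deg_def by blast
  define h where "h = hh fs gs"
  define K where "K = (1 / (1 - 2 powr (-\<beta>))) ^ d * 4 ^ d"
  define D where "D = Dhat_term \<beta> d f g"
  define S where "S = infsum D {p::nat. prime p}"
  define B where "B = exp (K * S)"
  have r2: "2 powr (-\<beta>) < 1" using assms(4) by (simp add: powr_minus_divide)
  have K0: "K \<ge> 0" using r2 by (simp add: K_def)
  have Dnn: "D p \<ge> 0" for p unfolding D_def Dhat_term_def by (intro sum_nonneg) auto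
  have local: "(\<Sum>e=1..M. cmod (h (p ^ e)) * (real p powr (-\<beta>)) ^ e) \<le> K * D p"
    if p: "prime p" for p M
  proof -
    define r where "r = real p powr (-\<beta>)"
    have p2: "real p \<ge> 2" using prime_ge_2_nat[OF p] by simp
    have r0: "r \<ge> 0" by (simp add: r_def)
    have rle: "r \<le> 2 powr (-\<beta>)" unfolding r_def using p2 assms(4) by (intro powr_mono2') auto
    then have r1: "r < 1" using r2 by simp
    have "(\<Sum>e=1..M. cmod (h (p ^ e)) * r ^ e) \<le> (1 / (1 - r)) ^ d * 4 ^ d *
           (\<Sum>k=1..d. cmod (conv_list gs (p ^ k) - conv_list fs (p ^ k)) * r ^ k)"
      unfolding h_def using fs gs p r0 r1
      by (intro hh_local_bound) (auto simp: prime_gt_0_nat)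
    also have "(\<Sum>k=1..d. cmod (conv_list gs (p ^ k) - conv_list fs (p ^ k)) * r ^ k) = D p"
      unfolding D_def Dhat_term_def
    proof (rule sum.cong[OF refl])
      fix k assume "k \<in> {1..d}"
      have pk: "p ^ k > 0" using p by (simp add: prime_gt_0_nat)
      have "r ^ k = real p powr (real k * (-\<beta>))"
        unfolding r_def using p2 by (subst powr_power) auto
      also have "\<dots> = 1 / real p powr (real k * \<beta>)"
        by (subst powr_minus_divide[symmetric]) simp
      finally have "r ^ k = 1 / real p powr (real k * \<beta>)" .
      then show "cmod (conv_list gs (p ^ k) - conv_list fs (p ^ k)) * r ^ k =
                 cmod (f (p ^ k) - g (p ^ k)) / real p powr (real k * \<beta>)"
        using fs(3) gs(3) pk by (simp add: norm_minus_commute)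
    qed
    also have "(1 / (1 - r)) ^ d * 4 ^ d * D p \<le> K * D p"
      unfolding K_def
    proof (intro mult_right_mono Dnn power_mono)
      show "1 / (1 - r) \<le> 1 / (1 - 2 powr (-\<beta>))"
        using rle r1 r2 by (intro divide_left_mono) auto
    qed (use r1 in auto)
    finally show ?thesis unfolding r_def .
  qed
  have Bbound: "(\<Sum>k=1..N. cmod (h k) * real k powr (-\<beta>)) \<le> B" for N
  proof -
    have "(\<Sum>k=1..N. cmod (h k) * real k powr (-\<beta>)) \<le> exp (\<Sum>p\<in>{p. prime p \<and> p \<le> N}. K * D p)"
    proof (rule euler_bound)
      show "multf h" by (simp add: h_def hh_def multf_mk)
    qed (rule local)
    also have "(\<Sum>p\<in>{p. prime p \<and> p \<le> N}. K * D p) \<le> K * S"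
      unfolding sum_distrib_left[symmetric] S_def
      using K0 by (intro mult_left_mono finite_sum_le_infsum) (use Dnn[unfolded D_def] in \<open>auto simp: D_def assms(5)\<close>)
    finally show ?thesis unfolding B_def by simp
  qed
  obtain C where C: "C > 0" "\<And>y. y \<ge> 1 \<Longrightarrow> cmod (summatory f y) \<le> C * y powr \<alpha>"
    using Sf_bound[OF assms(6)] by blast
  have B0: "B > 0" by (simp add: B_def)
  show ?thesis
  proof (rule landau_o.bigI)
    show "C * B > 0" using C B0 by simp
    show "eventually (\<lambda>x. norm (cmod (summatory g x)) \<le> C * B * norm (x powr max \<alpha> \<beta>)) at_top"
      using eventually_ge_at_top[of "1::real"]
    proof eventually_elim
      case (elim x)
      define N where "N = nat \<lfloor>x\<rfloor>"
      let ?\<gamma> = "max \<alpha> \<beta>"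
      have "summatory g x = (\<Sum>n=1..N. \<Sum>k | k dvd n. h k * f (n div k))"
        unfolding summatory_def N_def
      proof (rule sum.cong[OF refl])
        fix n assume n: "n \<in> {1..nat \<lfloor>x\<rfloor>}"
        have "g n = dirichlet_conv (hh fs gs) (conv_list fs) n"
          using n gs(3) conv_eq[of fs gs n] fs(2) gs(2) by auto
        also have "\<dots> = (\<Sum>k | k dvd n. h k * f (n div k))"
          unfolding dirichlet_conv_def h_def
        proof (rule sum.cong[OF refl])
          fix k assume "k \<in> {k. k dvd n}"
          then have "n div k > 0" using n by (auto simp: dvd_div_eq_0_iff)
          then show "hh fs gs k * conv_list fs (n div k) = hh fs gs k * f (n div k)"
            using fs(3) by simp
        qed
        finally show "g n = (\<Sum>k | k dvd n. h k * f (n div k))" .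
      qed
      also have "\<dots> = (\<Sum>k=1..N. \<Sum>m=1..N div k. h k * f m)"
        by (rule swap_sum)
      also have "\<dots> = (\<Sum>k=1..N. h k * summatory f (x / real k))"
        unfolding summatory_def
        by (intro sum.cong refl) (use elim in \<open>auto simp: sum_distrib_left floor_div_nat N_def\<close>)
      finally have eq: "summatory g x = (\<Sum>k=1..N. h k * summatory f (x / real k))" .
      have "cmod (summatory g x) \<le> (\<Sum>k=1..N. cmod (h k) * cmod (summatory f (x / real k)))"
        unfolding eq by (rule order_trans[OF norm_sum]) (simp add: norm_mult)
      also have "\<dots> \<le> (\<Sum>k=1..N. cmod (h k) * real k powr (-\<beta>) * (C * x powr ?\<gamma>))"
      proof (rule sum_mono)
        fix k assume k: "k \<in> {1..N}"
        have "int k \<le> \<lfloor>x\<rfloor>" using k elim by (simp add: N_def le_nat_iff)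
        then have kx: "real k \<le> x" by (simp add: le_floor_iff)
        have k1: "real k \<ge> 1" using k by simp
        have xk: "x / real k \<ge> 1" using kx k1 by simp
        have "cmod (summatory f (x / real k)) \<le> C * (x / real k) powr \<alpha>"
          using C(2)[OF xk] .
        also have "\<dots> \<le> C * (x / real k) powr ?\<gamma>"
          using C(1) xk by (intro mult_left_mono powr_mono) auto
        also have "(x / real k) powr ?\<gamma> = x powr ?\<gamma> / real k powr ?\<gamma>"
          by (rule powr_divide)
        also have "x powr ?\<gamma> / real k powr ?\<gamma> \<le> x powr ?\<gamma> / real k powr \<beta>"
          using k1 by (intro divide_left_mono powr_mono) auto
        also have "x powr ?\<gamma> / real k powr \<beta> = real k powr (-\<beta>) * x powr ?\<gamma>"
          by (simp add: powr_minus_divide)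
        finally have "cmod (summatory f (x / real k)) \<le> C * (real k powr (-\<beta>) * x powr ?\<gamma>)"
          using C(1) by simp
        then show "cmod (h k) * cmod (summatory f (x / real k)) \<le> cmod (h k) * real k powr (-\<beta>) * (C * x powr ?\<gamma>)"
        proof -
          assume a: "cmod (summatory f (x / real k)) \<le> C * (real k powr (-\<beta>) * x powr ?\<gamma>)"
          have "cmod (h k) * cmod (summatory f (x / real k)) \<le> cmod (h k) * (C * (real k powr (-\<beta>) * x powr ?\<gamma>))"
            by (rule mult_left_mono[OF a norm_ge_zero])
          then show ?thesis by (simp only: ac_simps)
        qed
      qed
      also have "\<dots> = (\<Sum>k=1..N. cmod (h k) * real k powr (-\<beta>)) * (C * x powr ?\<gamma>)"
        by (simp add: sum_distrib_right)
      also have "\<dots> \<le> B * (C * x powr ?\<gamma>)"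
        using Bbound C(1) by (intro mult_right_mono) auto
      finally show ?case using elim by (simp add: algebra_simps)
    qed
  qed
qed


end
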